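(* For all integers $n,k\ge 0$, the unsigned Stirling numbers of the first kind satisfy $\left[{n \atop k}\right] \le \frac{2^n n!}{k!}$.
   Context: $\left[{n \atop k}\right]$ denotes the unsigned Stirling number of the first kind (number of permutations of $n$ elements with exactly $k$ cycles), satisfying $\left[{n+1 \atop k}\right] = n\left[{n \atop k}\right] + \left[{n \atop k-1}\right]$. *)

theory Defs
  imports Complex_Main "HOL-Combinatorics.Stirling"
begin

end

theory Submission
  imports Defs
begin

lemma aux: "stirling n k * fact k \<le> (2::nat) ^ n * fact n"
proof (induction n arbitrary: k)
  case 0
  then show ?case by (cases k) auto
next
  case (Suc n)
  show ?case
  proof (cases k)
    case 0
    then show ?thesis by simp
  next
    case (Suc j)
    show ?thesis
    proof (cases "j \<le> n")
      case False
      then show ?thesis using Suc by simp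
    next
      case True
      have e: "stirling (Suc n) k * fact k
          = n * (stirling n k * fact k) + k * (stirling n j * fact j)"
        using Suc by (simp add: algebra_simps)
      have a: "n * (stirling n k * fact k) \<le> n * (2 ^ n * fact n)"
        using Suc.IH[of k] by simp
      have b: "k * (stirling n j * fact j) \<le> k * (2 ^ n * fact n)"
        using Suc.IH[of j] by simp
      have c: "n * (2 ^ n * fact n) + k * (2 ^ n * fact n) \<le> (2::nat) ^ Suc n * fact (Suc n)"
      proof -
        have "n + k \<le> 2 * Suc n" using True Suc by simp
        hence "(n + k) * (2 ^ n * fact n) \<le> (2 * Suc n) * (2 ^ n * fact n)"
          by (rule mult_right_mono) simp
        thus ?thesis by (simp add: algebra_simps)
      qed
      show ?thesis using e a b c by linarith
    qed
  qed
qed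

theorem lemma1:
  fixes n k :: nat
  shows "real (stirling n k) \<le> 2 ^ n * fact n / fact k"
proof -
  have "real (stirling n k * fact k) \<le> real (2 ^ n * fact n)"
    using aux of_nat_le_iff by blast
  hence "real (stirling n k) * fact k \<le> 2 ^ n * fact n" by simp
  thus ?thesis by (simp add: field_simps)
qed

end
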